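(* Let $r$ be a positive integer and let $M\in\{0,1\}^{n\times n}$ with $\operatorname{rank}(M)\leq r$. Let $d=|M|/n$ and let $\Delta$ be the maximum number of $1$ entries in a row or column of $M$. If $d\leq n/2$ and $\Delta\leq 1.1d$, then $$\operatorname{pdisc}(M)\geq\frac{d^{1/2}n^{3/2}}{7\sqrt{r}}.$$
   Context: $|M|$ is the number of $1$ entries of $M$; let $N=2n$ and $p=|M|/n^2$. The symmetrization of $M$ is the symmetric matrix $A\in\mathbb{R}^{N\times N}$ with $A_{i,j+n}=A_{j+n,i}=M_{i,j}$ and all other entries $0$. $L\in\mathbb{R}^{N\times N}$ is the adjacency matrix of the complete bipartite graph with parts $[n]$ and $[n+1,N]$. For $X\in\mathbb{R}^{N\times N}$, $\operatorname{disc}(X)=\langle X,A\rangle-p\langle X,L\rangle$ (entrywise inner product), and $\operatorname{pdisc}(M)=\max\{\operatorname{disc}(X): X\text{ symmetric positive semidefinite},\ X_{i,i}\leq1\ \forall i\}$. *)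

theory Defs
  imports "HOL-Analysis.Analysis"
begin

(* The index set [N] = [2n] of the symmetrization is the sum type 'n + 'n:
   Inl i stands for row index i in [n], Inr j stands for index j + n. *)

definition zero_one_matrix :: "real^'n::finite^'n \<Rightarrow> bool" where
  "zero_one_matrix M \<longleftrightarrow> (\<forall>i j. M $ i $ j = 0 \<or> M $ i $ j = 1)"

definition num_ones :: "real^'n::finite^'n \<Rightarrow> nat" where
  "num_ones M = card {(i, j). M $ i $ j = 1}"

definition row_ones :: "real^'n::finite^'n \<Rightarrow> 'n \<Rightarrow> nat" where
  "row_ones M i = card {j. M $ i $ j = 1}"

definition col_ones :: "real^'n::finite^'n \<Rightarrow> 'n \<Rightarrow> nat" where
  "col_ones M j = card {i. M $ i $ j = 1}"

definition max_degree :: "real^'n::finite^'n \<Rightarrow> nat" where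
  "max_degree M = max (Max (range (row_ones M))) (Max (range (col_ones M)))"

definition symmetrization :: "real^'n::finite^'n \<Rightarrow> real^('n::finite + 'n)^('n + 'n)" where
  "symmetrization M = (\<chi> a b. case (a, b) of
      (Inl i, Inr j) \<Rightarrow> M $ i $ j
    | (Inr j, Inl i) \<Rightarrow> M $ i $ j
    | _ \<Rightarrow> 0)"

definition bip_L :: "real^('n::finite + 'n)^('n + 'n)" where
  "bip_L = (\<chi> a b. case (a, b) of
      (Inl i, Inr j) \<Rightarrow> 1
    | (Inr j, Inl i) \<Rightarrow> 1
    | _ \<Rightarrow> 0)"

definition frob_inner :: "real^'m::finite^'m \<Rightarrow> real^'m::finite^'m \<Rightarrow> real" where
  "frob_inner X Y = (\<Sum>a\<in>UNIV. \<Sum>b\<in>UNIV. X $ a $ b * Y $ a $ b)"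

definition psd :: "real^'m::finite^'m \<Rightarrow> bool" where
  "psd X \<longleftrightarrow> transpose X = X \<and> (\<forall>x. x \<bullet> (X *v x) \<ge> 0)"

definition density :: "real^'n::finite^'n \<Rightarrow> real" where
  "density M = real (num_ones M) / (real CARD('n))^2"

definition disc :: "real^'n::finite^'n \<Rightarrow> real^('n + 'n)^('n + 'n) \<Rightarrow> real" where
  "disc M X = frob_inner X (symmetrization M) - density M * frob_inner X bip_L"

definition pdisc :: "real^'n::finite^'n \<Rightarrow> real" where
  "pdisc M = Sup {disc M X | X. psd X \<and> (\<forall>a. X $ a $ a \<le> 1)}"

end

theory Submission
  imports Defs
begin

lemma sum_UNIV_Plus:
  "(\<Sum>a\<in>(UNIV::('a::finite + 'b::finite) set). f a) = (\<Sum>i\<in>UNIV. f (Inl i)) + (\<Sum>j\<in>UNIV. f (Inr j))"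
  using sum.Plus[of UNIV UNIV f] by (simp add: comp_def)

lemma frob_sym:
  fixes M :: "real^'n::finite^'n" and X :: "real^('n + 'n)^('n + 'n)"
  assumes "\<And>a b. X $ a $ b = X $ b $ a"
  shows "frob_inner X (symmetrization M) = 2 * (\<Sum>i\<in>UNIV. \<Sum>j\<in>UNIV. X $ Inl i $ Inr j * M $ i $ j)"
    and "frob_inner X bip_L = 2 * (\<Sum>i\<in>UNIV. \<Sum>j\<in>UNIV. X $ Inl i $ Inr j)"
proof -
  have s1: "(\<Sum>j\<in>UNIV. \<Sum>i\<in>UNIV. X $ Inr j $ Inl i * M $ i $ j) = (\<Sum>i\<in>UNIV. \<Sum>j\<in>UNIV. X $ Inl i $ Inr j * M $ i $ j)"
  proof -
    have "(\<Sum>j\<in>UNIV. \<Sum>i\<in>UNIV. X $ Inr j $ Inl i * M $ i $ j) = (\<Sum>j\<in>UNIV. \<Sum>i\<in>UNIV. X $ Inl i $ Inr j * M $ i $ j)"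
      using assms by presburger
    also have "\<dots> = (\<Sum>i\<in>UNIV. \<Sum>j\<in>UNIV. X $ Inl i $ Inr j * M $ i $ j)"
      by (rule sum.swap)
    finally show ?thesis .
  qed
  have s2: "(\<Sum>j\<in>UNIV. \<Sum>i\<in>UNIV. X $ Inr j $ Inl i) = (\<Sum>i\<in>UNIV. \<Sum>j\<in>UNIV. X $ Inl i $ Inr j)"
  proof -
    have "(\<Sum>j\<in>UNIV. \<Sum>i\<in>UNIV. X $ Inr j $ Inl i) = (\<Sum>j\<in>UNIV. \<Sum>i\<in>UNIV. X $ Inl i $ Inr j)"
      using assms by presburger
    also have "\<dots> = (\<Sum>i\<in>UNIV. \<Sum>j\<in>UNIV. X $ Inl i $ Inr j)"
      by (rule sum.swap)
    finally show ?thesis .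
  qed
  have "frob_inner X (symmetrization M) = (\<Sum>i\<in>UNIV. \<Sum>j\<in>UNIV. X $ Inl i $ Inr j * M $ i $ j) + (\<Sum>j\<in>UNIV. \<Sum>i\<in>UNIV. X $ Inr j $ Inl i * M $ i $ j)"
    unfolding frob_inner_def symmetrization_def by (simp add: sum_UNIV_Plus)
  then show "frob_inner X (symmetrization M) = 2 * (\<Sum>i\<in>UNIV. \<Sum>j\<in>UNIV. X $ Inl i $ Inr j * M $ i $ j)"
    using s1 by simp
  have "frob_inner X bip_L = (\<Sum>i\<in>UNIV. \<Sum>j\<in>UNIV. X $ Inl i $ Inr j) + (\<Sum>j\<in>UNIV. \<Sum>i\<in>UNIV. X $ Inr j $ Inl i)"
    unfolding frob_inner_def bip_L_def by (simp add: sum_UNIV_Plus)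
  then show "frob_inner X bip_L = 2 * (\<Sum>i\<in>UNIV. \<Sum>j\<in>UNIV. X $ Inl i $ Inr j)"
    using s2 by simp
qed

lemma psd_entry_bound:
  fixes X :: "real^'m::finite^'m"
  assumes "psd X" "\<And>a. X $ a $ a \<le> 1"
  shows "\<bar>X $ a $ b\<bar> \<le> 1"
proof -
  have sym: "X $ b $ a = X $ a $ b"
    using assms(1) unfolding psd_def by (metis transpose_def vec_lambda_beta)
  have q: "(axis a 1 + t *\<^sub>R axis b 1) \<bullet> (X *v (axis a 1 + t *\<^sub>R axis b 1))
        = X $ a $ a + t * X $ a $ b + t * X $ b $ a + t * t * X $ b $ b" for t :: real
    by (simp add: matrix_vector_right_distrib matrix_vector_mult_scaleR inner_add_left inner_add_right
        matrix_vector_mult_basis inner_axis' algebra_simps column_def)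
  have "0 \<le> X $ a $ a + 1 * X $ a $ b + 1 * X $ b $ a + 1 * 1 * X $ b $ b"
    using assms(1) unfolding psd_def q[symmetric] by blast
  moreover have "0 \<le> X $ a $ a + (-1) * X $ a $ b + (-1) * X $ b $ a + (-1) * (-1) * X $ b $ b"
    using assms(1) unfolding psd_def q[symmetric] by blast
  ultimately show ?thesis using assms(2)[of a] assms(2)[of b] sym by auto
qed

lemma proj_exists:
  fixes M :: "real^'n::finite^'m::finite"
  obtains q :: "'n \<Rightarrow> real^'n" where "\<And>i j. M $ i \<bullet> q j = M $ i $ j"
    and "(\<Sum>j\<in>UNIV. q j \<bullet> q j) = real (rank M)"
proof -
  have sub: "subspace (span (rows M))" by simp
  obtain B where B: "B \<subseteq> span (rows M)" "pairwise orthogonal B"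
      "\<And>x. x \<in> B \<Longrightarrow> norm x = 1" "independent B" "card B = dim (span (rows M))"
      "span B = span (rows M)"
    using orthonormal_basis_subspace[OF sub] by metis
  have fin: "finite B" using B(4) independent_imp_finite by blast
  define q where "q j = (\<Sum>b\<in>B. (b $ j) *\<^sub>R b)" for j
  have key: "x \<bullet> q j = x $ j" if "x \<in> span B" for x j
  proof -
    have "x \<bullet> q j = (\<Sum>b\<in>B. (b $ j) * (x \<bullet> b))"
      unfolding q_def by (simp add: inner_sum_right)
    also have "\<dots> = (\<Sum>b\<in>B. (x \<bullet> b) *\<^sub>R b) $ j"
      by (simp add: sum_component mult.commute)
    also have "\<dots> = x $ j"
      using orthonormal_basis_expand[OF B(2) B(3) that fin] by simp
    finally show ?thesis .
  qed
  have qspan: "q j \<in> span B" for j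
    unfolding q_def by (simp add: span_clauses span_sum)
  have rows: "M $ i \<in> span B" for i
  proof -
    have "row i M \<in> rows M" by (auto simp: rows_def)
    moreover have "row i M = M $ i" by (simp add: row_def vec_eq_iff)
    ultimately show ?thesis using B(6) span_superset by fastforce
  qed
  have "(\<Sum>j\<in>UNIV. q j \<bullet> q j) = (\<Sum>j\<in>UNIV. q j $ j)"
    using key qspan by simp
  also have "\<dots> = (\<Sum>j\<in>UNIV. \<Sum>b\<in>B. b $ j * b $ j)"
    unfolding q_def by (simp add: sum_component)
  also have "\<dots> = (\<Sum>b\<in>B. b \<bullet> b)"
    by (subst sum.swap) (simp add: inner_vec_def)
  also have "\<dots> = (\<Sum>b\<in>B. 1)"
    using B(3) by (simp add: norm_eq_1)
  also have "\<dots> = real (rank M)"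
    using B(5) by (simp add: row_rank_def dim_span)
  finally show ?thesis using that key rows by blast
qed

lemma card_sum_real:
  fixes f :: "'a::finite \<Rightarrow> real"
  assumes "\<And>x. f x = 0 \<or> f x = 1"
  shows "real (card {x. f x = 1}) = (\<Sum>x\<in>UNIV. f x)"
proof -
  have "real (card {x. f x = 1}) = (\<Sum>x\<in>{x. f x = 1}. 1)" by simp
  also have "\<dots> = (\<Sum>x\<in>UNIV. if f x = 1 then 1 else 0)"
    by (simp add: sum.If_cases Int_def)
  also have "\<dots> = (\<Sum>x\<in>UNIV. f x)"
    by (rule sum.cong) (use assms in auto)
  finally show ?thesis .
qed

lemma counts:
  fixes M :: "real^'n::finite^'n"
  assumes "zero_one_matrix M"
  shows "real (num_ones M) = (\<Sum>i\<in>UNIV. \<Sum>j\<in>UNIV. M $ i $ j)"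
    and "real (row_ones M i) = (\<Sum>j\<in>UNIV. M $ i $ j)"
    and "real (col_ones M j) = (\<Sum>i\<in>UNIV. M $ i $ j)"
proof -
  have z: "\<And>i j. M $ i $ j = 0 \<or> M $ i $ j = 1" using assms unfolding zero_one_matrix_def by blast
  have "real (num_ones M) = (\<Sum>x\<in>UNIV. (\<lambda>(i,j). M $ i $ j) x)"
  proof -
    have "{(i, j). M $ i $ j = 1} = {x. (\<lambda>(i,j). M $ i $ j) x = 1}" by auto
    then show ?thesis unfolding num_ones_def using card_sum_real[of "\<lambda>(i,j). M $ i $ j"] z
      by (simp add: case_prod_beta)
  qed
  also have "\<dots> = (\<Sum>i\<in>UNIV. \<Sum>j\<in>UNIV. M $ i $ j)"
    by (simp add: sum.cartesian_product UNIV_Times_UNIV[symmetric] del: UNIV_Times_UNIV)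
  finally show "real (num_ones M) = (\<Sum>i\<in>UNIV. \<Sum>j\<in>UNIV. M $ i $ j)" .
  show "real (row_ones M i) = (\<Sum>j\<in>UNIV. M $ i $ j)"
    unfolding row_ones_def using card_sum_real[of "\<lambda>j. M $ i $ j"] z by simp
  show "real (col_ones M j) = (\<Sum>i\<in>UNIV. M $ i $ j)"
    unfolding col_ones_def using card_sum_real[of "\<lambda>i. M $ i $ j"] z by simp
qed

lemma deg_bounds:
  fixes M :: "real^'n::finite^'n"
  shows "row_ones M i \<le> max_degree M" "col_ones M j \<le> max_degree M"
  unfolding max_degree_def by (auto intro!: Max_ge simp: le_max_iff_disj)

lemma bdd_disc:
  fixes M :: "real^'n::finite^'n"
  shows "bdd_above {disc M X | X. psd X \<and> (\<forall>a. X $ a $ a \<le> 1)}"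
proof -
  define K where "K = (\<Sum>a\<in>UNIV. \<Sum>b\<in>UNIV. \<bar>symmetrization M $ a $ b - density M * bip_L $ a $ b\<bar>)"
  have "disc M X \<le> K" if "psd X" "\<forall>a. X $ a $ a \<le> 1" for X
  proof -
    have "disc M X = (\<Sum>a\<in>UNIV. \<Sum>b\<in>UNIV. X $ a $ b * (symmetrization M $ a $ b - density M * bip_L $ a $ b))"
      unfolding disc_def frob_inner_def
      by (simp add: right_diff_distrib sum_subtractf sum_distrib_left mult.left_commute)
    also have "\<dots> \<le> K" unfolding K_def
    proof (intro sum_mono)
      fix a b
      have "\<bar>X $ a $ b\<bar> \<le> 1" using psd_entry_bound that by blast
      then show "X $ a $ b * (symmetrization M $ a $ b - density M * bip_L $ a $ b)
          \<le> \<bar>symmetrization M $ a $ b - density M * bip_L $ a $ b\<bar>"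
      proof -
        have "X $ a $ b * (symmetrization M $ a $ b - density M * bip_L $ a $ b)
            \<le> \<bar>X $ a $ b\<bar> * \<bar>symmetrization M $ a $ b - density M * bip_L $ a $ b\<bar>"
          by (metis abs_ge_self abs_mult)
        also have "\<dots> \<le> 1 * \<bar>symmetrization M $ a $ b - density M * bip_L $ a $ b\<bar>"
          by (rule mult_right_mono) (use \<open>\<bar>X $ a $ b\<bar> \<le> 1\<close> in auto)
        finally show ?thesis by simp
      qed
    qed
    finally show ?thesis .
  qed
  then show ?thesis by (auto simp: bdd_above_def)
qed

lemma pdisc_ge:
  fixes M :: "real^'n::finite^'n"
  assumes "psd X" "\<forall>a. X $ a $ a \<le> 1"
  shows "disc M X \<le> pdisc M"
  unfolding pdisc_def by (rule cSup_upper) (use assms bdd_disc in auto)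

lemma gram_psd:
  fixes w :: "'m::finite \<Rightarrow> real^'k::finite"
  shows "psd (\<chi> a b. w a \<bullet> w b)"
  unfolding psd_def
proof
  show "transpose (\<chi> a b. w a \<bullet> w b) = (\<chi> a b. w a \<bullet> w b)"
    by (simp add: transpose_def vec_eq_iff inner_commute)
  show "\<forall>x. 0 \<le> x \<bullet> ((\<chi> a b. w a \<bullet> w b) *v x)"
  proof
    fix x :: "real^'m"
    have e1: "x \<bullet> ((\<chi> a b. w a \<bullet> w b) *v x) = (\<Sum>a\<in>UNIV. \<Sum>b\<in>UNIV. x $ a * x $ b * (w a \<bullet> w b))"
      unfolding inner_vec_def[of x] matrix_vector_mult_def
      by (simp add: sum_distrib_left ac_simps)
    have e2: "(\<Sum>a\<in>UNIV. x $ a *\<^sub>R w a) \<bullet> (\<Sum>b\<in>UNIV. x $ b *\<^sub>R w b) = (\<Sum>b\<in>UNIV. \<Sum>a\<in>UNIV. x $ b * (x $ a * (w a \<bullet> w b)))"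
      by (simp add: inner_sum_left inner_sum_right sum_distrib_left ac_simps)
    have e3: "(\<Sum>a\<in>UNIV. \<Sum>b\<in>UNIV. x $ a * x $ b * (w a \<bullet> w b)) = (\<Sum>b\<in>UNIV. \<Sum>a\<in>UNIV. x $ b * (x $ a * (w a \<bullet> w b)))"
      by (subst sum.swap) (simp add: ac_simps)
    have "x \<bullet> ((\<chi> a b. w a \<bullet> w b) *v x) = (\<Sum>a\<in>UNIV. x $ a *\<^sub>R w a) \<bullet> (\<Sum>b\<in>UNIV. x $ b *\<^sub>R w b)"
      using e1 e2 e3 by simp
    then show "0 \<le> x \<bullet> ((\<chi> a b. w a \<bullet> w b) *v x)" by simp
  qed
qed

theorem lemma3p3:
  fixes M :: "real^'n::finite^'n" and r :: nat
  assumes "r > 0"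
    and "zero_one_matrix M"
    and "rank M \<le> r"
    and "num_ones M / real CARD('n) \<le> real CARD('n) / 2"
    and "real (max_degree M) \<le> 1.1 * (num_ones M / real CARD('n))"
  shows "pdisc M \<ge> sqrt (num_ones M / real CARD('n)) * real CARD('n) powr (3/2) / (7 * sqrt (real r))"
proof (cases "num_ones M = 0")
  case True
  have "disc M (\<chi> a b. (\<lambda>_::'n+'n. 0::real^'n) a \<bullet> (\<lambda>_. 0) b) \<le> pdisc M"
    by (rule pdisc_ge[OF gram_psd]) simp
  moreover have "disc M (\<chi> a b. (\<lambda>_::'n+'n. 0::real^'n) a \<bullet> (\<lambda>_. 0) b) = 0"
    by (simp add: disc_def frob_inner_def)
  ultimately show ?thesis using True by simp
next
  case False
  define nn where "nn = real CARD('n)"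
  have nn0: "nn > 0" unfolding nn_def by simp
  define d where "d = real (num_ones M) / nn"
  define D where "D = real (max_degree M)"
  have z: "\<And>i j. M$i$j = 0 \<or> M$i$j = 1" using assms(2) unfolding zero_one_matrix_def by blast
  have dpos: "d > 0" unfolding d_def using False nn0 by simp
  have tot: "(\<Sum>i\<in>UNIV. \<Sum>j\<in>UNIV. M$i$j) = nn * d"
    using counts(1)[OF assms(2)] nn0 unfolding d_def by simp
  have Drow: "(\<Sum>j\<in>UNIV. M$i$j) \<le> D" for i
    using counts(2)[OF assms(2), of i] deg_bounds(1)[of M i] unfolding D_def by simp
  have Dcol: "(\<Sum>i\<in>UNIV. M$i$j) \<le> D" for j
    using counts(3)[OF assms(2), of j] deg_bounds(2)[of M j] unfolding D_def by simp
  have "nn * d \<le> nn * D"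
  proof -
    have "nn * d \<le> (\<Sum>i\<in>(UNIV::'n set). D)" unfolding tot[symmetric] by (rule sum_mono) (rule Drow)
    then show ?thesis by (simp add: nn_def)
  qed
  then have dD: "d \<le> D" using nn0 by simp
  have Dpos: "D > 0" using dD dpos by simp
  have D11: "D \<le> 1.1 * d" using assms(5) unfolding D_def d_def nn_def by simp
  have dle: "d \<le> nn / 2" using assms(4) unfolding d_def nn_def by simp
  define p where "p = density M"
  have p_eq: "p = d / nn" unfolding p_def density_def d_def nn_def by (simp add: power2_eq_square)
  have p_le: "p \<le> 1/2" using dle nn0 unfolding p_eq by (simp add: divide_simps)
  obtain q :: "'n \<Rightarrow> real^'n" where q1: "\<And>i j. M$i \<bullet> q j = M$i$j"
    and q2: "(\<Sum>j\<in>UNIV. q j \<bullet> q j) = real (rank M)"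
    using proj_exists by blast
  define G where "G = {j. q j \<bullet> q j \<le> 2 * real r / nn}"
  define a where "a = 1 / sqrt D"
  define b where "b = sqrt (nn / (2 * real r))"
  define w where "w = (\<lambda>x. case x of Inl i \<Rightarrow> a *\<^sub>R (M$i) | Inr j \<Rightarrow> (if j \<in> G then b *\<^sub>R q j else 0))"
  define X where "X = (\<chi> x y. w x \<bullet> w y)"
  have psdX: "psd X" unfolding X_def by (rule gram_psd)
  have aa: "a * a = 1 / D" unfolding a_def using Dpos by (simp add: divide_simps)
  have bb: "b * b = nn / (2 * real r)" unfolding b_def using nn0 assms(1) by simp
  have diagX: "\<forall>x. X$x$x \<le> 1"
  proof
    fix x show "X$x$x \<le> 1"
    proof (cases x)
      case (Inl i)
      have "M$i \<bullet> M$i = (\<Sum>j\<in>UNIV. M$i$j)"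
        unfolding inner_vec_def by (rule sum.cong) (use z in auto)
      moreover have "X$x$x = (a * a) * (M$i \<bullet> M$i)"
        unfolding X_def w_def Inl by simp
      ultimately have "X$x$x = (\<Sum>j\<in>UNIV. M$i$j) / D"
        using aa by simp
      then show ?thesis using Drow[of i] Dpos by simp
    next
      case (Inr j)
      show ?thesis
      proof (cases "j \<in> G")
        case True
        then have "X$x$x = (b * b) * (q j \<bullet> q j)"
          unfolding X_def w_def Inr by simp
        then have "X$x$x = nn / (2 * real r) * (q j \<bullet> q j)"
          using bb by simp
        also have "\<dots> \<le> nn / (2 * real r) * (2 * real r / nn)"
          using True nn0 unfolding G_def by (intro mult_left_mono) auto
        also have "\<dots> = 1" using nn0 assms(1) by simp
        finally show ?thesis .
      next
        case False
        then show ?thesis unfolding X_def w_def Inr by simp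
      qed
    qed
  qed
  have symX: "X$x$y = X$y$x" for x y by (simp add: X_def inner_commute)
  have Y: "X $ Inl i $ Inr j = (if j \<in> G then a * b * M$i$j else 0)" for i j
    by (simp add: X_def w_def q1)
  have YM: "X $ Inl i $ Inr j * M$i$j = (if j \<in> G then a * b * M$i$j else 0)" for i j
  proof (cases "M$i$j = 0")
    case True then show ?thesis by (simp add: Y)
  next
    case False then have "M$i$j = 1" using z by blast
    then show ?thesis by (simp add: Y)
  qed
  define S where "S = (\<Sum>j\<in>G. \<Sum>i\<in>UNIV. M$i$j)"
  have Ssum: "(\<Sum>i\<in>UNIV. \<Sum>j\<in>UNIV. (if j \<in> G then a * b * M$i$j else 0)) = a * b * S"
  proof -
    have "(\<Sum>i\<in>UNIV. \<Sum>j\<in>UNIV. (if j \<in> G then a * b * M$i$j else 0))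
        = (\<Sum>i\<in>UNIV. \<Sum>j\<in>G. a * b * M$i$j)"
      by (rule sum.cong) (simp_all add: sum.inter_restrict[of UNIV, simplified, symmetric])
    also have "\<dots> = (\<Sum>j\<in>G. \<Sum>i\<in>UNIV. a * b * M$i$j)"
      by (rule sum.swap)
    also have "\<dots> = a * b * S"
      unfolding S_def by (simp add: sum_distrib_left)
    finally show ?thesis .
  qed
  have disc_eq: "disc M X = 2 * a * b * (1 - p) * S"
  proof -
    have "disc M X = 2 * (\<Sum>i\<in>UNIV. \<Sum>j\<in>UNIV. X $ Inl i $ Inr j * M $ i $ j)
        - p * (2 * (\<Sum>i\<in>UNIV. \<Sum>j\<in>UNIV. X $ Inl i $ Inr j))"
      unfolding disc_def p_def using frob_sym[OF symX] by simp
    also have "\<dots> = 2 * (a * b * S) - p * (2 * (a * b * S))"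
      unfolding YM Ssum unfolding Y Ssum by simp
    finally show ?thesis by (simp add: algebra_simps)
  qed
  have bad: "real (card (UNIV - G)) * (2 * real r / nn) \<le> real r"
  proof -
    have "real (card (UNIV - G)) * (2 * real r / nn) = (\<Sum>j\<in>UNIV - G. 2 * real r / nn)" by simp
    also have "\<dots> \<le> (\<Sum>j\<in>UNIV - G. q j \<bullet> q j)"
      by (rule sum_mono) (auto simp: G_def)
    also have "\<dots> \<le> (\<Sum>j\<in>UNIV. q j \<bullet> q j)"
      by (rule sum_mono2) auto
    also have "\<dots> \<le> real r" using q2 assms(3) by simp
    finally show ?thesis .
  qed
  have cardbad: "real (card (UNIV - G)) \<le> nn / 2"
  proof -
    have "real (card (UNIV - G)) * (2 * real r) \<le> real r * nn"
      using bad nn0 by (simp add: field_simps)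
    then show ?thesis using assms(1) by (simp add: field_simps)
  qed
  have onesbad: "(\<Sum>j\<in>UNIV - G. \<Sum>i\<in>UNIV. M$i$j) \<le> real (card (UNIV - G)) * D"
    using sum_bounded_above[of "UNIV - G" "\<lambda>j. \<Sum>i\<in>UNIV. M$i$j" D] Dcol by simp
  have "S + (\<Sum>j\<in>UNIV - G. \<Sum>i\<in>UNIV. M$i$j) = nn * d"
  proof -
    have tot': "(\<Sum>j\<in>UNIV. \<Sum>i\<in>UNIV. M$i$j) = nn * d"
      by (subst sum.swap) (rule tot)
    show ?thesis
      unfolding S_def tot'[symmetric]
      using sum.Int_Diff[of UNIV "\<lambda>j. \<Sum>i\<in>UNIV. M$i$j" G] by simp
  qed
  moreover have "real (card (UNIV - G)) * D \<le> nn / 2 * (1.1 * d)"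
    using cardbad D11 Dpos by (intro mult_mono) auto
  ultimately have Sge: "S \<ge> 0.45 * nn * d" using onesbad by simp
  have ab: "a * b \<ge> sqrt nn / (2 * sqrt (real r) * sqrt d)"
  proof -
    have "a * b = sqrt nn / sqrt (2 * real r * D)"
      unfolding a_def b_def by (simp add: real_sqrt_divide real_sqrt_mult)
    moreover have "sqrt (2 * real r * D) \<le> 2 * sqrt (real r) * sqrt d"
    proof -
      have "2 * real r * D \<le> 4 * real r * d" using D11 dpos assms(1) by simp
      then have "sqrt (2 * real r * D) \<le> sqrt (4 * real r * d)" by (rule real_sqrt_le_mono)
      also have "\<dots> = 2 * sqrt (real r) * sqrt d" by (simp add: real_sqrt_mult)
      finally show ?thesis .
    qed
    moreover have "sqrt (2 * real r * D) > 0" using assms(1) Dpos by simp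
    ultimately show ?thesis using nn0
      by (simp add: frac_le divide_left_mono)
  qed
  have ab0: "0 \<le> a * b" unfolding a_def b_def using Dpos nn0 by simp
  have pw: "nn powr (3/2) = nn * sqrt nn"
    using powr_add[of nn 1 "1/2"] powr_half_sqrt[of nn] nn0 by simp
  have "sqrt d * nn powr (3/2) / (7 * sqrt (real r)) \<le> a * b * (0.45 * nn * d)"
  proof -
    have sd: "sqrt d * sqrt d = d" using dpos by simp
    have sd40: "sqrt d * (40 * sqrt d) = 40 * d" by (metis sd mult.assoc mult.commute)
    have "sqrt d * nn powr (3/2) / (7 * sqrt (real r)) \<le> sqrt nn / (2 * sqrt (real r) * sqrt d) * (0.45 * nn * d)"
      unfolding pw using dpos nn0 assms(1)
      by (simp add: divide_simps sd40)
    also have "\<dots> \<le> a * b * (0.45 * nn * d)"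
      using ab dpos nn0 by (intro mult_right_mono) auto
    finally show ?thesis .
  qed
  also have "\<dots> \<le> a * b * S"
    using Sge ab0 by (intro mult_left_mono) auto
  also have "\<dots> \<le> disc M X"
  proof -
    have "0 \<le> 0.45 * nn * d" using dpos nn0 by (intro mult_nonneg_nonneg) auto
    then have S0: "S \<ge> 0" using Sge by (rule order.trans)
    have abS: "a * b * S \<ge> 0" using S0 ab0 by simp
    have p2: "2 * (1 - p) \<ge> 1" using p_le by simp
    have "1 * (a * b * S) \<le> (2 * (1 - p)) * (a * b * S)"
      using mult_right_mono[OF p2 abS] .
    then show ?thesis unfolding disc_eq by (simp add: algebra_simps)
  qed
  also have "\<dots> \<le> pdisc M" by (rule pdisc_ge[OF psdX diagX])
  finally show ?thesis unfolding d_def nn_def .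
qed

end
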